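(* Let $S^{(i)}_{n,k}$ be as defined (weights $a_j=1$, $n\ge2$, $1\le i\le n$). Convergence is in distribution. (1) For fixed $n\ge2$ and $k\to\infty$: $S^{(i)}_{n,k}/k\to\mathrm{Beta}(1,n-1)$. (2) For $n,k\to\infty$ with $k/n\to\infty$: $\frac nk S^{(i)}_{n,k}\to\mathrm{Exp}(1)$. (3) For $n,k\to\infty$ with $k/n\to c>0$: $S^{(i)}_{n,k}\to G$, where $\mathbb P\{G=0\}=\frac1{1+c}+\frac{c}{(1+c)^2}$ and $\mathbb P\{G=j\}=\frac{c^{j+1}}{(1+c)^{j+2}}$ for $j\ge1$. (4) For $n\to\infty$ with $k/n\to0$: $S^{(i)}_{n,k}\to0$.
   Context: For $\vec\ell=(\ell_1,\dots,\ell_k)$ with $n\ge\ell_1\ge\cdots\ge\ell_k\ge1$ and $1\le i\le n$ let $\sigma^{(i)}(\vec\ell)=|\{1\le j\le k-1:\ell_j=\ell_{j+1}=i\}|$. $S^{(i)}_{n,k}=\sigma^{(i)}(\vec\ell)$ for $\vec\ell$ uniformly random among the $\binom{n+k-1}{k}$ such sequences. $\mathrm{Beta}(1,n-1)$ has density $(n-1)(1-x)^{n-2}$ on $[0,1]$; $\mathrm{Exp}(1)$ has density $e^{-x}$ on $[0,\infty)$. *)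

theory Defs
  imports "HOL-Probability.Probability"
begin

definition seqs :: "nat \<Rightarrow> nat \<Rightarrow> nat list set" where
  "seqs n k = {l. length l = k \<and> sorted_wrt (\<ge>) l \<and> set l \<subseteq> {1..n}}"

text \<open>sigma^(i)(l): number of j with 1 <= j <= k-1 and l_j = l_(j+1) = i (0-indexed here).\<close>
definition sigma :: "nat \<Rightarrow> nat list \<Rightarrow> nat" where
  "sigma i l = card {j. Suc j < length l \<and> l ! j = i \<and> l ! Suc j = i}"

definition S_pmf :: "nat \<Rightarrow> nat \<Rightarrow> nat \<Rightarrow> nat pmf" where
  "S_pmf n k i = map_pmf (sigma i) (pmf_of_set (seqs n k))"

definition S_law :: "(nat \<Rightarrow> real) \<Rightarrow> nat \<Rightarrow> nat \<Rightarrow> nat \<Rightarrow> real measure" where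
  "S_law g n k i = measure_pmf (map_pmf g (S_pmf n k i))"

definition beta1_law :: "nat \<Rightarrow> real measure" where
  "beta1_law n = density lborel
     (\<lambda>x. ennreal (indicator {0..1} x * (real n - 1) * (1 - x) ^ (n - 2)))"

definition exp1_law :: "real measure" where
  "exp1_law = density lborel (\<lambda>x. ennreal (exponential_density 1 x))"

definition G_mass :: "real \<Rightarrow> nat \<Rightarrow> real" where
  "G_mass c j = (if j = 0 then 1 / (1 + c) + c / (1 + c)^2
                 else c ^ (j + 1) / (1 + c) ^ (j + 2))"

definition G_law :: "real \<Rightarrow> real measure" where
  "G_law c = distr (density (count_space UNIV) (\<lambda>j. ennreal (G_mass c j))) borel real"

end

theory Submission
  imports Defs
begin


lemma sorted_desc_rev: "sorted_wrt (\<ge>) l \<longleftrightarrow> sorted (rev l)"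
  by (simp add: sorted_wrt_rev)

lemma mset_inj_seqs: "inj_on mset (seqs n k)"
proof (rule inj_onI)
  fix x y assume "x \<in> seqs n k" "y \<in> seqs n k" "mset x = mset y"
  then have "sorted (rev x)" "sorted (rev y)" "mset (rev x) = mset (rev y)"
    by (auto simp: seqs_def sorted_desc_rev)
  then have "rev x = rev y" by (metis properties_for_sort)
  then show "x = y" by simp
qed

lemma mset_image_seqs: "mset ` seqs n k = multisets_of_size {1..n} k"
proof
  show "mset ` seqs n k \<subseteq> multisets_of_size {1..n} k"
    by (auto simp: seqs_def multisets_of_size_def)
  show "multisets_of_size {1..n} k \<subseteq> mset ` seqs n k"
  proof
    fix M assume M: "M \<in> multisets_of_size {1..n} k"
    let ?l = "rev (sorted_list_of_multiset M)"
    have "?l \<in> seqs n k" using M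
      by (auto simp: seqs_def multisets_of_size_def sorted_desc_rev)
         (metis mset_sorted_list_of_multiset size_mset)
    moreover have "mset ?l = M" by simp
    ultimately show "M \<in> mset ` seqs n k" by force
  qed
qed

lemma card_seqs: "n \<ge> 1 \<Longrightarrow> card (seqs n k) = (n + k - 1) choose k"
proof -
  have "card (seqs n k) = card (multisets_of_size {1..n} k)"
    using card_image[OF mset_inj_seqs] mset_image_seqs by metis
  also have "\<dots> = (n + k - 1) choose k" by (simp add: card_multisets_of_size)
  finally show ?thesis .
qed

lemma finite_seqs: "finite (seqs n k)"
  using mset_inj_seqs mset_image_seqs finite_multisets_of_size
  by (metis finite_atLeastAtMost finite_imageD)

lemma seqs_ne: "n \<ge> 1 \<Longrightarrow> seqs n k \<noteq> {}"
  using finite_seqs card_seqs[of n k] by (auto simp: card_eq_0_iff)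



lemma sigma_Cons: "sigma i (x # l) = sigma i l + (if l \<noteq> [] \<and> x = i \<and> hd l = i then 1 else 0)"
proof -
  let ?A = "{j. Suc j < length l \<and> l ! j = i \<and> l ! Suc j = i}"
  have eq: "{j. Suc j < length (x # l) \<and> (x # l) ! j = i \<and> (x # l) ! Suc j = i}
        = Suc ` ?A \<union> (if l \<noteq> [] \<and> x = i \<and> hd l = i then {0} else {})"
  proof (rule set_eqI)
    fix j show "j \<in> {j. Suc j < length (x # l) \<and> (x # l) ! j = i \<and> (x # l) ! Suc j = i} \<longleftrightarrow>
        j \<in> Suc ` ?A \<union> (if l \<noteq> [] \<and> x = i \<and> hd l = i then {0} else {})"
      by (cases j) (auto simp: image_iff hd_conv_nth)
  qed
  have fin: "finite ?A" by (rule finite_subset[of _ "{..<length l}"]) auto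
  show ?thesis unfolding sigma_def eq
    using fin by (auto simp: card_image)
qed

lemma sigma_Nil: "sigma i [] = 0" by (simp add: sigma_def)

lemma sigma_count: "sorted_wrt (\<ge>) l \<Longrightarrow> sigma i l = count_list l i - 1"
proof (induction l)
  case Nil then show ?case by (simp add: sigma_Nil)
next
  case (Cons x l)
  then have IH: "sigma i l = count_list l i - 1" and s: "\<forall>y\<in>set l. y \<le> x" by auto
  show ?case
  proof (cases "l = []")
    case True then show ?thesis by (simp add: sigma_Cons sigma_Nil)
  next
    case ne: False
    show ?thesis
    proof (cases "x = i")
      case xi: True
      show ?thesis
      proof (cases "hd l = i")
        case True
        then have "count_list l i \<ge> 1" using ne
          by (metis One_nat_def Suc_leI count_list_0_iff hd_in_set neq0_conv)
        then show ?thesis using IH xi True ne by (simp add: sigma_Cons)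
      next
        case False
        have "hd l \<in> set l" using ne by simp
        have "sorted_wrt (\<ge>) l" using Cons.prems by simp
        then have "\<forall>y\<in>set l. y \<le> hd l" using ne
          by (metis list.collapse sorted_wrt.simps(2) order_refl set_ConsD)
        moreover have "hd l < i" using s xi False ne by (metis hd_in_set le_neq_implies_less)
        ultimately have "count_list l i = 0" by (metis count_list_0_iff not_le)
        then show ?thesis using IH xi False by (simp add: sigma_Cons)
      qed
    next
      case False
      then show ?thesis using IH by (simp add: sigma_Cons)
    qed
  qed
qed

lemma card_count_ge:
  assumes "r \<le> k" and i: "i \<in> {1..n}"
  shows "card {l \<in> seqs n k. r \<le> count_list l i} = card (seqs n (k - r))"
proof -
  have "card {l \<in> seqs n k. r \<le> count_list l i}
      = card (mset ` {l \<in> seqs n k. r \<le> count_list l i})"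
    by (rule card_image[symmetric], rule inj_on_subset[OF mset_inj_seqs]) auto
  also have "mset ` {l \<in> seqs n k. r \<le> count_list l i} = {M \<in> multisets_of_size {1..n} k. r \<le> count M i}"
    using mset_image_seqs[of n k] by (auto simp: count_mset) (metis (mono_tags, lifting) count_mset image_iff mem_Collect_eq)
  also have "card \<dots> = card (multisets_of_size {1..n} (k - r))"
  proof (cases "r = 0")
    case True then show ?thesis by simp
  next
    case False
    have "bij_betw (\<lambda>M. M + replicate_mset r i) (multisets_of_size {1..n} (k - r))
            {M \<in> multisets_of_size {1..n} k. r \<le> count M i}"
    proof (rule bij_betw_byWitness[where f' = "\<lambda>M. M - replicate_mset r i"])
      show "\<forall>a\<in>multisets_of_size {1..n} (k - r). a + replicate_mset r i - replicate_mset r i = a" by simp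
      show "\<forall>a'\<in>{M \<in> multisets_of_size {1..n} k. r \<le> count M i}. a' - replicate_mset r i + replicate_mset r i = a'"
        by (auto simp: multiset_eq_iff)
      show "(\<lambda>M. M + replicate_mset r i) ` multisets_of_size {1..n} (k - r) \<subseteq> {M \<in> multisets_of_size {1..n} k. r \<le> count M i}"
        using i assms(1) by (auto simp: multisets_of_size_def split: if_splits)
      show "(\<lambda>M. M - replicate_mset r i) ` {M \<in> multisets_of_size {1..n} k. r \<le> count M i} \<subseteq> multisets_of_size {1..n} (k - r)"
      proof (rule image_subsetI)
        fix M assume M: "M \<in> {M \<in> multisets_of_size {1..n} k. r \<le> count M i}"
        have sub: "replicate_mset r i \<subseteq># M" using M by (simp add: subseteq_mset_def)
        have "set_mset (M - replicate_mset r i) \<subseteq> set_mset M" by (auto simp: set_mset_diff not_in_iff)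
        then show "M - replicate_mset r i \<in> multisets_of_size {1..n} (k - r)"
          using M sub by (auto simp: multisets_of_size_def size_Diff_submset)
      qed
    qed
    then show ?thesis by (simp add: bij_betw_same_card)
  qed
  also have "\<dots> = card (seqs n (k - r))"
    using card_image[OF mset_inj_seqs] mset_image_seqs by metis
  finally show ?thesis .
qed



definition tailp :: "nat \<Rightarrow> nat \<Rightarrow> nat \<Rightarrow> real" where
  "tailp n k r = (\<Prod>j<r. (real k - real j) / (real n - 1 + real k - real j))"

lemma tail_ratio:
  assumes n: "n \<ge> 2" shows "r \<le> k \<Longrightarrow> real (card (seqs n (k - r))) / real (card (seqs n k)) = tailp n k r"
proof (induction r)
  case 0
  have "card (seqs n k) > 0" using card_seqs[of n k] n by simp
  then show ?case by (simp add: tailp_def)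
next
  case (Suc r)
  define m where "m = n + k - r - 2"
  define s where "s = k - r - 1"
  have ms: "Suc m = n + (k - r) - 1" "Suc s = k - r" using Suc.prems n by (auto simp: m_def s_def)
  have c1: "card (seqs n (k - Suc r)) = m choose s"
    using card_seqs[of n "k - Suc r"] n Suc.prems by (simp add: m_def s_def)
  have c2: "card (seqs n (k - r)) = Suc m choose Suc s"
    using card_seqs[of n "k - r"] n by (simp add: ms)
  have key: "real (Suc m) * real (m choose s) = real (Suc m choose Suc s) * real (Suc s)"
    by (metis Suc_times_binomial_eq of_nat_mult)
  have "real (card (seqs n (k - Suc r))) = real (card (seqs n (k - r))) * ((real k - real r) / (real n - 1 + real k - real r))"
  proof -
    have "real (Suc m) = real n - 1 + real k - real r" using ms(1) Suc.prems n by linarith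
    moreover have "real (Suc s) = real k - real r" using ms(2) Suc.prems by linarith
    moreover have "real (m choose s) = real (Suc m choose Suc s) * (real (Suc s) / real (Suc m))"
    proof -
      have "real (Suc m) > 0" by (simp del: of_nat_Suc)
      then show ?thesis using key by (simp add: field_simps del: binomial_Suc_Suc of_nat_Suc)
    qed
    ultimately show ?thesis using c1 c2 by (simp del: binomial_Suc_Suc of_nat_Suc)
  qed
  then have "real (card (seqs n (k - Suc r))) / real (card (seqs n k)) = (real (card (seqs n (k - r))) / real (card (seqs n k))) * ((real k - real r) / (real n - 1 + real k - real r))"
    by simp
  also have "\<dots> = tailp n k r * ((real k - real r) / (real n - 1 + real k - real r))"
    using Suc by simp
  also have "\<dots> = tailp n k (Suc r)" by (simp add: tailp_def)
  finally show ?case .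
qed

lemma tailp_zero: "k < r \<Longrightarrow> tailp n k r = 0"
  unfolding tailp_def by (rule prod_zero) (auto intro!: bexI[of _ k])

lemma tail_prob:
  assumes n: "n \<ge> 2" and i: "i \<in> {1..n}"
  shows "real (card {l \<in> seqs n k. r \<le> count_list l i}) / real (card (seqs n k)) = tailp n k r"
proof (cases "r \<le> k")
  case True then show ?thesis using card_count_ge[OF True i] tail_ratio[OF n True] by simp
next
  case False
  have eq: "{l \<in> seqs n k. r \<le> count_list l i} = {}"
    using False count_le_length[of _ i] by (auto simp: seqs_def) (metis count_le_length le_trans)
  show ?thesis using False by (simp only: eq card.empty) (simp add: tailp_zero)
qed

lemma cdf_S:
  assumes n: "n \<ge> 2" and i: "i \<in> {1..n}" and a: "a > 0"
  shows "cdf (S_law (\<lambda>s. a * real s) n k i) x = (if x < 0 then 0 else 1 - tailp n k (nat \<lfloor>x / a\<rfloor> + 2))"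
proof -
  have fin: "finite (seqs n k)" and ne: "seqs n k \<noteq> {}" using finite_seqs seqs_ne n by auto
  have "cdf (S_law (\<lambda>s. a * real s) n k i) x = measure (pmf_of_set (seqs n k)) {l. a * real (sigma i l) \<le> x}"
    by (simp add: S_law_def S_pmf_def cdf_def map_pmf_comp vimage_def)
  also have "\<dots> = real (card (seqs n k \<inter> {l. a * real (sigma i l) \<le> x})) / real (card (seqs n k))"
    using fin ne by (simp add: measure_pmf_of_set)
  also have "\<dots> = (if x < 0 then 0 else 1 - tailp n k (nat \<lfloor>x / a\<rfloor> + 2))"
  proof (cases "x < 0")
    case True
    then have "seqs n k \<inter> {l. a * real (sigma i l) \<le> x} = {}" using a
      by auto (metis mult_nonneg_nonneg not_le of_nat_0_le_iff order.strict_trans1 less_imp_le)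
    then show ?thesis using True by simp
  next
    case False
    define t where "t = nat \<lfloor>x / a\<rfloor>"
    have eqv: "a * real s \<le> x \<longleftrightarrow> s \<le> t" for s
    proof -
      have "a * real s \<le> x \<longleftrightarrow> real s \<le> x / a" using a by (simp add: field_simps mult.commute)
      also have "\<dots> \<longleftrightarrow> int s \<le> \<lfloor>x / a\<rfloor>" by (simp add: le_floor_iff)
      also have "\<dots> \<longleftrightarrow> s \<le> t" unfolding t_def using False a by (simp add: le_nat_iff)
      finally show ?thesis .
    qed
    have "seqs n k \<inter> {l. a * real (sigma i l) \<le> x} = seqs n k - {l \<in> seqs n k. t + 2 \<le> count_list l i}"
      by (auto simp: eqv sigma_count seqs_def)
    then have "card (seqs n k \<inter> {l. a * real (sigma i l) \<le> x}) = card (seqs n k) - card {l \<in> seqs n k. t + 2 \<le> count_list l i}"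
      using fin by (simp add: card_Diff_subset finite_subset)
    moreover have "card {l \<in> seqs n k. t + 2 \<le> count_list l i} \<le> card (seqs n k)"
      using fin by (intro card_mono) auto
    ultimately have "real (card (seqs n k \<inter> {l. a * real (sigma i l) \<le> x})) / real (card (seqs n k))
        = 1 - real (card {l \<in> seqs n k. t + 2 \<le> count_list l i}) / real (card (seqs n k))"
      using fin ne by (simp add: of_nat_diff field_simps)
    then show ?thesis using tail_prob[OF n i] False by (simp add: t_def)
  qed
  finally show ?thesis .
qed



lemma cdf_return0: "cdf (return borel (0::real)) x = (if 0 \<le> x then 1 else 0)"
  by (simp add: cdf_def measure_return indicator_def)

lemma cdf_exp1: "cdf exp1_law x = (if 0 \<le> x then 1 - exp (- x) else 0)"
proof -
  have "emeasure exp1_law {..x} = ennreal (erlang_CDF 0 1 x)"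
    unfolding exp1_law_def by (rule emeasure_erlang_density) simp
  then have "cdf exp1_law x = erlang_CDF 0 1 x"
    by (simp add: cdf_def measure_def)
  then show ?thesis by (simp add: erlang_CDF_0)
qed

lemma G0: "(c::real) > 0 \<Longrightarrow> 1 / (1 + c) + c / (1 + c)^2 = 1 - (c / (1 + c)) ^ 2"
proof -
  assume "c > 0"
  then have h: "(1+c) \<noteq> 0" by simp
  have "1 - (c / (1 + c)) ^ 2 = ((1+c)^2 - c^2) / (1+c)^2" using h by (simp add: power_divide diff_divide_distrib)
  also have "\<dots> = ((1 + c) + c) / (1+c)^2" by (simp add: power2_eq_square algebra_simps)
  also have "\<dots> = (1 + c) / (1+c)^2 + c / (1 + c)^2" by (rule add_divide_distrib)
  also have "(1 + c) / (1+c)^2 = 1 / (1 + c)" using h by (simp add: power2_eq_square)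
  finally show ?thesis ..
qed

lemma G_sum: "c > 0 \<Longrightarrow> (\<Sum>j\<le>t. G_mass c j) = 1 - (c / (1 + c)) ^ (t + 2)"
proof (induction t)
  case 0
  then have h: "1 + c \<noteq> 0" by simp
  have e: "(\<Sum>j\<le>(0::nat). G_mass c j) = 1 / (1 + c) + c / (1 + c)^2"
    unfolding G_mass_def by simp
  show ?case unfolding e G0[OF 0] by (simp add: power_divide power2_eq_square)
next
  case (Suc t)
  define q where "q = c / (1 + c)"
  have h: "1 + c \<noteq> 0" using Suc.prems by simp
  have m: "G_mass c (Suc t) = q ^ (t + 2) / (1 + c)"
  proof -
    have "G_mass c (Suc t) = c ^ (t + 2) / (1 + c) ^ (t + 2) / (1 + c)"
      unfolding G_mass_def by (simp add: field_simps)
    then show ?thesis by (simp add: q_def power_divide)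
  qed
  have "(\<Sum>j\<le>Suc t. G_mass c j) = 1 - q ^ (t + 2) + q ^ (t + 2) / (1 + c)"
    using Suc m by (simp add: q_def)
  also have "\<dots> = 1 - q ^ (t + 2) * (1 - 1 / (1 + c))" by (simp add: algebra_simps)
  also have "1 - 1 / (1 + c) = q" using h by (simp add: q_def field_simps)
  also have "1 - q ^ (t + 2) * q = 1 - q ^ (Suc t + 2)" by simp
  finally show ?case by (simp add: q_def)
qed

lemma G_mass_nonneg: "c > 0 \<Longrightarrow> G_mass c j \<ge> 0"
  by (simp add: G_mass_def)

lemma cdf_G: assumes c: "c > 0"
  shows "cdf (G_law c) x = (if x < 0 then 0 else 1 - (c / (1 + c)) ^ (nat \<lfloor>x\<rfloor> + 2))"
proof -
  have "cdf (G_law c) x = measure (point_measure UNIV (\<lambda>j. ennreal (G_mass c j))) (real -` {..x})"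
    unfolding cdf_def G_law_def point_measure_def[symmetric]
    by (subst measure_distr) (auto simp: space_point_measure)
  also have "real -` {..x} = (if x < 0 then {} else {..nat \<lfloor>x\<rfloor>})"
  proof (cases "x < 0")
    case True then show ?thesis by auto
  next
    case False
    then have "0 \<le> \<lfloor>x\<rfloor>" by simp
    then have "real j \<le> x \<longleftrightarrow> j \<le> nat \<lfloor>x\<rfloor>" for j
      by (metis le_floor_iff le_nat_iff of_int_of_nat_eq)
    then show ?thesis using False by auto
  qed
  finally show ?thesis
  proof (cases "x < 0")
    case False
    assume h: "cdf (G_law c) x = measure (point_measure UNIV (\<lambda>j. ennreal (G_mass c j))) (if x < 0 then {} else {..nat \<lfloor>x\<rfloor>})"
    have "measure (point_measure UNIV (\<lambda>j. ennreal (G_mass c j))) {..nat \<lfloor>x\<rfloor>} = (\<Sum>j\<le>nat \<lfloor>x\<rfloor>. G_mass c j)"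
      unfolding measure_def
      by (subst emeasure_point_measure_finite2) (auto simp: c G_mass_nonneg sum_ennreal sum_nonneg)
    then show ?thesis using h False G_sum[OF c] by simp
  qed simp
qed



lemma cdf_beta:
  assumes n: "n \<ge> 2"
  shows "cdf (beta1_law n) x = (if x < 0 then 0 else if x \<le> 1 then 1 - (1 - x) ^ (n - 1) else 1)"
proof -
  define g where "g t = (real n - 1) * (1 - t) ^ (n - 2)" for t :: real
  define F where "F t = - ((1 - t) ^ (n - 1))" for t :: real
  have "emeasure (beta1_law n) {..x} = (\<integral>\<^sup>+ t. ennreal (indicator {0..1} t * (real n - 1) * (1 - t) ^ (n - 2)) * indicator {..x} t \<partial>lborel)"
    unfolding beta1_law_def by (rule emeasure_density) auto
  also have "\<dots> = (if x < 0 then 0 else (\<integral>\<^sup>+ t. ennreal (g t) * indicator {0..min x 1} t \<partial>lborel))"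
  proof (cases "x < 0")
    case True
    then show ?thesis by (auto intro!: nn_integral_zero' AE_I2 simp: indicator_def)
  next
    case False
    then show ?thesis
      by (auto intro!: nn_integral_cong simp: indicator_def g_def)
  qed
  also have "\<dots> = (if x < 0 then 0 else ennreal (F (min x 1) - F 0))"
  proof (cases "x < 0")
    case False
    have "(\<integral>\<^sup>+ t. ennreal (g t) * indicator {0..min x 1} t \<partial>lborel) = ennreal (F (min x 1) - F 0)"
    proof (rule nn_integral_FTC_Icc)
      show "g \<in> borel_measurable borel" unfolding g_def by measurable
      show "0 \<le> min x 1" using False by simp
      fix t assume t: "t \<in> {0..min x 1}"
      show "0 \<le> g t" unfolding g_def using t n by auto
      have "DERIV F t :> - (real (n - 1) * (1 - t) ^ (n - 1 - 1) * (- 1))"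
        unfolding F_def by (auto intro!: derivative_eq_intros)
      moreover have "- (real (n - 1) * (1 - t) ^ (n - 1 - 1) * (- 1)) = g t"
        using n by (simp add: g_def of_nat_diff numeral_2_eq_2)
      ultimately show "DERIV F t :> g t" by simp
    qed
    then show ?thesis using False by simp
  qed simp
  finally have e: "emeasure (beta1_law n) {..x} = (if x < 0 then 0 else ennreal (F (min x 1) - F 0))" .
  have "F (min x 1) - F 0 \<ge> 0" if "x \<ge> 0"
    using that by (auto simp: F_def min_def intro!: power_le_one)
  then have "cdf (beta1_law n) x = (if x < 0 then 0 else F (min x 1) - F 0)"
    using e by (simp add: cdf_def measure_def)
  then show ?thesis using n by (auto simp: F_def min_def)
qed



lemma tailp_bounds01:
  assumes n: "n \<ge> 2" shows "0 \<le> tailp n k r" "tailp n k r \<le> 1"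
proof -
  have i: "1 \<in> {1..n}" using n by simp
  have fin: "finite (seqs n k)" and ne: "card (seqs n k) > 0"
    using finite_seqs seqs_ne[of n k] n by (auto simp: card_gt_0_iff)
  have "card {l \<in> seqs n k. r \<le> count_list l 1} \<le> card (seqs n k)"
    using fin by (intro card_mono) auto
  then show "0 \<le> tailp n k r" "tailp n k r \<le> 1"
    unfolding tail_prob[OF n i, of k r, symmetric] using ne by (auto simp: divide_le_eq_1)
qed

lemma tailp_mono:
  assumes n: "n \<ge> 2" and rr: "r \<le> r'" shows "tailp n k r' \<le> tailp n k r"
proof -
  have i: "1 \<in> {1..n}" using n by simp
  have fin: "finite (seqs n k)" and ne: "card (seqs n k) > 0"
    using finite_seqs seqs_ne[of n k] n by (auto simp: card_gt_0_iff)
  have "card {l \<in> seqs n k. r' \<le> count_list l 1} \<le> card {l \<in> seqs n k. r \<le> count_list l 1}"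
    using fin rr by (intro card_mono) auto
  then show ?thesis
    unfolding tail_prob[OF n i, of k r, symmetric] tail_prob[OF n i, of k r', symmetric]
    by (simp add: divide_right_mono)
qed

lemma frac_mono:
  fixes N z w :: real assumes "0 \<le> N" "0 < z" "z \<le> w"
  shows "z / (N + z) \<le> w / (N + w)"
  using assms by (simp add: divide_simps) (simp add: algebra_simps mult_left_mono)

lemma tailp_upper:
  assumes n: "n \<ge> 2" shows "tailp n k r \<le> (real k / (real n - 1 + real k)) ^ r"
proof (cases "r \<le> k")
  case False
  have "real n \<ge> 2" using n by simp
  then have "0 \<le> real k / (real n - 1 + real k)" by simp
  then show ?thesis using tailp_zero[of k r n] False by simp
next
  case True
  have "tailp n k r \<le> (\<Prod>j<r. real k / (real n - 1 + real k))"
    unfolding tailp_def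
  proof (rule prod_mono)
    fix j assume j: "j \<in> {..<r}"
    then have "real j < real k" using True by simp
    then show "0 \<le> (real k - real j) / (real n - 1 + real k - real j) \<and>
      (real k - real j) / (real n - 1 + real k - real j) \<le> real k / (real n - 1 + real k)"
      using n frac_mono[of "real n - 1" "real k - real j" "real k"]
      by (auto simp: algebra_simps)
  qed
  then show ?thesis by simp
qed

lemma tailp_lower:
  assumes n: "n \<ge> 2" and rk: "r \<le> k"
  shows "((real k - real r + 1) / (real n - 1 + (real k - real r + 1))) ^ r \<le> tailp n k r"
proof -
  have "(\<Prod>j<r. (real k - real r + 1) / (real n - 1 + (real k - real r + 1))) \<le> tailp n k r"
    unfolding tailp_def
  proof (rule prod_mono)
    fix j assume j: "j \<in> {..<r}"
    then have "real j + 1 \<le> real r" by simp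
    then show "0 \<le> (real k - real r + 1) / (real n - 1 + (real k - real r + 1)) \<and>
      (real k - real r + 1) / (real n - 1 + (real k - real r + 1)) \<le> (real k - real j) / (real n - 1 + real k - real j)"
      using n rk frac_mono[of "real n - 1" "real k - real r + 1" "real k - real j"]
      by (auto simp: algebra_simps)
  qed
  then show ?thesis by simp
qed

lemma binom_prod: "real ((N + K) choose N) * fact N = (\<Prod>t<N. real K + 1 + real t)"
proof (induction N)
  case 0 then show ?case by simp
next
  case (Suc N)
  have key: "real (Suc (N + K)) * real ((N + K) choose N) = real (Suc (N + K) choose Suc N) * real (Suc N)"
    by (metis Suc_times_binomial_eq of_nat_mult)
  have "real ((Suc N + K) choose Suc N) * fact (Suc N) = real (Suc (N + K) choose Suc N) * real (Suc N) * fact N"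
    by (simp add: algebra_simps)
  also have "\<dots> = real (Suc (N + K)) * (real ((N + K) choose N) * fact N)"
    using key by (simp add: algebra_simps)
  also have "\<dots> = (\<Prod>t<Suc N. real K + 1 + real t)"
    using Suc by (simp add: algebra_simps)
  finally show ?case .
qed

lemma card_seqs_real:
  assumes n: "n \<ge> 2"
  shows "real (card (seqs n K)) = (\<Prod>t<n - 1. real K + 1 + real t) / fact (n - 1)"
proof -
  have "card (seqs n K) = (n - 1 + K) choose (n - 1)"
  proof -
    have "card (seqs n K) = (n + K - 1) choose K" using card_seqs[of n K] n by simp
    also have "\<dots> = (n + K - 1) choose (n + K - 1 - K)" by (rule binomial_symmetric) (use n in simp)
    also have "n + K - 1 - K = n - 1" using n by simp
    also have "n + K - 1 = n - 1 + K" using n by simp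
    finally show ?thesis .
  qed
  then show ?thesis using binom_prod[of "n - 1" K] by (simp add: field_simps)
qed

lemma tailp_prod2:
  assumes n: "n \<ge> 2" and rk: "r \<le> k"
  shows "tailp n k r = (\<Prod>t<n - 1. (real k - real r + 1 + real t) / (real k + 1 + real t))"
proof -
  have "tailp n k r = real (card (seqs n (k - r))) / real (card (seqs n k))"
    using tail_ratio[OF n rk] by simp
  also have "\<dots> = (\<Prod>t<n - 1. real (k - r) + 1 + real t) / (\<Prod>t<n - 1. real k + 1 + real t)"
    unfolding card_seqs_real[OF n] by simp
  also have "\<dots> = (\<Prod>t<n - 1. (real k - real r + 1 + real t) / (real k + 1 + real t))"
    using rk by (simp add: prod_dividef of_nat_diff)
  finally show ?thesis .
qed



lemma cdf_S_real:
  assumes n: "n \<ge> 2" and i: "i \<in> {1..n}"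
  shows "cdf (S_law real n k i) x = (if x < 0 then 0 else 1 - tailp n k (nat \<lfloor>x\<rfloor> + 2))"
  using cdf_S[OF n i, of 1 k x] by simp

lemma inv_real_to0:
  assumes "filterlim nn at_top sequentially"
  shows "(\<lambda>m. 1 / real (nn m :: nat)) \<longlonglongrightarrow> 0"
proof -
  have "filterlim (\<lambda>m. real (nn m)) at_top sequentially"
    by (rule filterlim_compose[OF filterlim_real_sequentially assms])
  then show ?thesis using tendsto_inverse_0_at_top by (simp add: inverse_eq_divide)
qed

lemma part4:
  assumes hyp: "\<forall>m. 2 \<le> nn m \<and> 1 \<le> ii m \<and> ii m \<le> nn m"
    and nn: "filterlim nn at_top sequentially"
    and lim: "(\<lambda>m. real (kk m) / real (nn m)) \<longlonglongrightarrow> 0"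
  shows "weak_conv_m (\<lambda>m. S_law real (nn m) (kk m) (ii m)) (return borel 0)"
  unfolding weak_conv_m_def weak_conv_def
proof (intro allI impI)
  fix x :: real
  show "(\<lambda>m. cdf (S_law real (nn m) (kk m) (ii m)) x) \<longlonglongrightarrow> cdf (return borel 0) x"
  proof (cases "x < 0")
    case True
    then show ?thesis using hyp by (simp add: cdf_S_real cdf_return0)
  next
    case False
    define t where "t = nat \<lfloor>x\<rfloor> + 2"
    have eq: "cdf (S_law real (nn m) (kk m) (ii m)) x = 1 - tailp (nn m) (kk m) t" for m
      using hyp False by (simp add: cdf_S_real t_def)
    have "(\<lambda>m. tailp (nn m) (kk m) t) \<longlonglongrightarrow> 0"
    proof (rule tendsto_sandwich[where f = "\<lambda>_. 0" and h = "\<lambda>m. 2 * (real (kk m) / real (nn m))"])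
      show "\<forall>\<^sub>F m in sequentially. 0 \<le> tailp (nn m) (kk m) t"
        using hyp tailp_bounds01 by auto
      show "\<forall>\<^sub>F m in sequentially. tailp (nn m) (kk m) t \<le> 2 * (real (kk m) / real (nn m))"
      proof (rule always_eventually, rule allI)
        fix m
        have n: "nn m \<ge> 2" using hyp by auto
        have "tailp (nn m) (kk m) t \<le> tailp (nn m) (kk m) 1"
          using tailp_mono[OF n] t_def by simp
        also have "\<dots> = real (kk m) / (real (nn m) - 1 + real (kk m))"
          by (simp add: tailp_def)
        also have "\<dots> \<le> 2 * (real (kk m) / real (nn m))"
        proof -
          have h2: "real (nn m) \<ge> 2" using n by simp
          have "real (kk m) / (real (nn m) - 1 + real (kk m)) \<le> real (kk m) / (real (nn m) / 2)"
            using h2 by (intro divide_left_mono) auto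
          then show ?thesis by (simp add: mult.commute)
        qed
        finally show "tailp (nn m) (kk m) t \<le> 2 * (real (kk m) / real (nn m))" .
      qed
      show "(\<lambda>m. 2 * (real (kk m) / real (nn m))) \<longlonglongrightarrow> 0"
        using tendsto_mult_right_zero[OF lim, of 2] by simp
    qed simp
    then have "(\<lambda>m. 1 - tailp (nn m) (kk m) t) \<longlonglongrightarrow> 1 - 0"
      by (intro tendsto_diff) auto
    then show ?thesis using False by (simp add: eq cdf_return0)
  qed
qed



lemma div_div_same: "(n::real) \<noteq> 0 \<Longrightarrow> (a / n) / (b / n) = a / b"
  by (cases "b = 0") (simp_all add: field_simps)

lemma lim_base:
  fixes d c :: real
  assumes hyp: "\<forall>m. 2 \<le> nn m"
    and nn: "filterlim nn at_top sequentially"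
    and lim: "(\<lambda>m. real (kk m) / real (nn m)) \<longlonglongrightarrow> c" and c: "c \<ge> 0"
  shows "(\<lambda>m. (real (kk m) - d) / (real (nn m) - 1 + (real (kk m) - d))) \<longlonglongrightarrow> c / (1 + c)"
proof -
  have i: "(\<lambda>m. 1 / real (nn m)) \<longlonglongrightarrow> 0" by (rule inv_real_to0[OF nn])
  have e: "(\<lambda>m. d * (1 / real (nn m))) \<longlonglongrightarrow> 0" using tendsto_mult_right_zero[OF i, of d] by simp
  have "(\<lambda>m. (real (kk m) / real (nn m) - d * (1 / real (nn m))) /
        (1 - 1 / real (nn m) + real (kk m) / real (nn m) - d * (1 / real (nn m)))) \<longlonglongrightarrow> (c - 0) / (1 - 0 + c - 0)"
    using c by (intro tendsto_intros lim i e) auto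
  moreover have "(real (kk m) / real (nn m) - d * (1 / real (nn m))) /
        (1 - 1 / real (nn m) + real (kk m) / real (nn m) - d * (1 / real (nn m)))
      = (real (kk m) - d) / (real (nn m) - 1 + (real (kk m) - d))" for m
  proof -
    have n0: "real (nn m) \<noteq> 0" using hyp by (metis not_numeral_le_zero of_nat_eq_0_iff le_zero_eq)
    have "(real (kk m) / real (nn m) - d * (1 / real (nn m))) = (real (kk m) - d) / real (nn m)"
      using n0 by (simp add: field_simps)
    moreover have "(1 - 1 / real (nn m) + real (kk m) / real (nn m) - d * (1 / real (nn m)))
        = (real (nn m) - 1 + (real (kk m) - d)) / real (nn m)"
      using n0 by (simp add: field_simps)
    ultimately show ?thesis using div_div_same[OF n0] by simp
  qed
  ultimately show ?thesis by simp
qed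

lemma part3:
  assumes c: "0 < c"
    and hyp: "\<forall>m. 2 \<le> nn m \<and> 1 \<le> ii m \<and> ii m \<le> nn m"
    and nn: "filterlim nn at_top sequentially" and kk: "filterlim kk at_top sequentially"
    and lim: "(\<lambda>m. real (kk m) / real (nn m)) \<longlonglongrightarrow> c"
  shows "weak_conv_m (\<lambda>m. S_law real (nn m) (kk m) (ii m)) (G_law c)"
  unfolding weak_conv_m_def weak_conv_def
proof (intro allI impI)
  fix x :: real
  show "(\<lambda>m. cdf (S_law real (nn m) (kk m) (ii m)) x) \<longlonglongrightarrow> cdf (G_law c) x"
  proof (cases "x < 0")
    case True
    then show ?thesis using hyp c by (simp add: cdf_S_real cdf_G)
  next
    case False
    define t where "t = nat \<lfloor>x\<rfloor> + 2"
    have eq: "cdf (S_law real (nn m) (kk m) (ii m)) x = 1 - tailp (nn m) (kk m) t" for m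
      using hyp False by (simp add: cdf_S_real t_def)
    have hyp2: "\<forall>m. 2 \<le> nn m" using hyp by auto
    have "(\<lambda>m. tailp (nn m) (kk m) t) \<longlonglongrightarrow> (c / (1 + c)) ^ t"
    proof (rule tendsto_sandwich[where f = "\<lambda>m. ((real (kk m) - real t + 1) / (real (nn m) - 1 + (real (kk m) - real t + 1))) ^ t"
          and h = "\<lambda>m. (real (kk m) / (real (nn m) - 1 + real (kk m))) ^ t"])
      have "\<forall>\<^sub>F m in sequentially. t \<le> kk m" using kk by (simp add: filterlim_at_top)
      then show "\<forall>\<^sub>F m in sequentially. ((real (kk m) - real t + 1) / (real (nn m) - 1 + (real (kk m) - real t + 1))) ^ t \<le> tailp (nn m) (kk m) t"
        by eventually_elim (use hyp tailp_lower in auto)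
      show "\<forall>\<^sub>F m in sequentially. tailp (nn m) (kk m) t \<le> (real (kk m) / (real (nn m) - 1 + real (kk m))) ^ t"
        using hyp tailp_upper by auto
      have "(\<lambda>m. (real (kk m) - (real t - 1)) / (real (nn m) - 1 + (real (kk m) - (real t - 1)))) \<longlonglongrightarrow> c / (1 + c)"
        by (rule lim_base[OF hyp2 nn lim]) (use c in simp)
      then show "(\<lambda>m. ((real (kk m) - real t + 1) / (real (nn m) - 1 + (real (kk m) - real t + 1))) ^ t) \<longlonglongrightarrow> (c / (1 + c)) ^ t"
        by (intro tendsto_power) (simp add: algebra_simps)
      have "(\<lambda>m. (real (kk m) - 0) / (real (nn m) - 1 + (real (kk m) - 0))) \<longlonglongrightarrow> c / (1 + c)"
        by (rule lim_base[OF hyp2 nn lim]) (use c in simp)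
      then show "(\<lambda>m. (real (kk m) / (real (nn m) - 1 + real (kk m))) ^ t) \<longlonglongrightarrow> (c / (1 + c)) ^ t"
        by (intro tendsto_power) simp
    qed
    then have "(\<lambda>m. 1 - tailp (nn m) (kk m) t) \<longlonglongrightarrow> 1 - (c / (1 + c)) ^ t"
      by (intro tendsto_diff) auto
    then show ?thesis using False c by (simp add: eq cdf_G t_def)
  qed
qed



lemma upper_exp:
  assumes n: "n \<ge> 2"
  shows "tailp n k r \<le> exp (- real r * ((real n - 1) / (real n - 1 + real k)))"
proof -
  have N: "real n - 1 \<ge> 1" using n by simp
  have pos: "real n - 1 + real k > 0" using N by simp
  have b1: "real k / (real n - 1 + real k) = 1 + (- ((real n - 1) / (real n - 1 + real k)))"
    using pos by (simp add: field_simps)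
  have "real k / (real n - 1 + real k) \<le> exp (- ((real n - 1) / (real n - 1 + real k)))"
    unfolding b1 by (rule exp_ge_add_one_self)
  then have "(real k / (real n - 1 + real k)) ^ r \<le> exp (- ((real n - 1) / (real n - 1 + real k))) ^ r"
    using pos by (intro power_mono) auto
  also have "\<dots> = exp (- real r * ((real n - 1) / (real n - 1 + real k)))"
    by (simp add: exp_of_nat_mult[symmetric])
  finally show ?thesis using tailp_upper[OF n, of k r] by linarith
qed

lemma exp_frac: fixes N L :: real assumes L: "0 < L" and N: "0 \<le> N" shows "exp (- (N / L)) \<le> L / (N + L)"
proof -
  have "1 + N / L \<le> exp (N / L)" by (rule exp_ge_add_one_self)
  moreover have "1 + N / L = (N + L) / L" using L by (simp add: field_simps)
  moreover have "(N + L) / L > 0" using L N by simp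
  ultimately have "1 / exp (N / L) \<le> 1 / ((N + L) / L)"
    by (intro frac_le) auto
  then show ?thesis by (simp add: exp_minus inverse_eq_divide)
qed

lemma lower_exp:
  assumes n: "n \<ge> 2" and rk: "r \<le> k"
  shows "exp (- real r * ((real n - 1) / (real k - real r + 1))) \<le> tailp n k r"
proof -
  have N: "real n - 1 \<ge> 1" using n by simp
  have L: "real k - real r + 1 > 0" using rk by simp
  have "exp (- real r * ((real n - 1) / (real k - real r + 1))) = exp (- ((real n - 1) / (real k - real r + 1))) ^ r"
    by (simp add: exp_of_nat_mult[symmetric])
  also have "\<dots> \<le> ((real k - real r + 1) / (real n - 1 + (real k - real r + 1))) ^ r"
    using exp_frac[OF L, of "real n - 1"] N by (intro power_mono) auto
  also have "\<dots> \<le> tailp n k r" by (rule tailp_lower[OF n rk])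
  finally show ?thesis .
qed



lemma part2:
  assumes hyp: "\<forall>m. 2 \<le> nn m \<and> 1 \<le> ii m \<and> ii m \<le> nn m"
    and nn: "filterlim nn at_top sequentially" and kk: "filterlim kk at_top sequentially"
    and lim: "filterlim (\<lambda>m. real (kk m) / real (nn m)) at_top sequentially"
  shows "weak_conv_m (\<lambda>m. S_law (\<lambda>x. real (nn m) * real x / real (kk m)) (nn m) (kk m) (ii m)) exp1_law"
  unfolding weak_conv_m_def weak_conv_def
proof (intro allI impI)
  fix x :: real
  define y where "y m = real (kk m) / real (nn m)" for m
  define r where "r m = nat \<lfloor>x * y m\<rfloor> + 2" for m
  have kpos: "\<forall>\<^sub>F m in sequentially. kk m \<ge> 1" using kk by (simp add: filterlim_at_top)
  have cdfeq: "\<forall>\<^sub>F m in sequentially. (if x < 0 then 0 else 1 - tailp (nn m) (kk m) (r m))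
       = cdf (S_law (\<lambda>x. real (nn m) * real x / real (kk m)) (nn m) (kk m) (ii m)) x"
    using kpos
  proof eventually_elim
    case (elim m)
    have n: "nn m \<ge> 2" and i: "ii m \<in> {1..nn m}" using hyp by auto
    have a: "real (nn m) / real (kk m) > 0" using n elim by simp
    have f: "(\<lambda>x. real (nn m) * real x / real (kk m)) = (\<lambda>s. (real (nn m) / real (kk m)) * real s)"
      by (simp add: fun_eq_iff)
    have xa: "x / (real (nn m) / real (kk m)) = x * y m" by (simp add: y_def)
    show ?case unfolding f cdf_S[OF n i a] xa r_def by simp
  qed
  have goal: "(\<lambda>m. if x < 0 then 0 else 1 - tailp (nn m) (kk m) (r m)) \<longlonglongrightarrow> cdf exp1_law x"
  proof (cases "x < 0")
    case True then show ?thesis by (simp add: cdf_exp1)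
  next
    case False
    then have x0: "x \<ge> 0" by simp
    have inv_n: "(\<lambda>m. 1 / real (nn m)) \<longlonglongrightarrow> 0" by (rule inv_real_to0[OF nn])
    have inv_k: "(\<lambda>m. 1 / real (kk m)) \<longlonglongrightarrow> 0" by (rule inv_real_to0[OF kk])
    have nk: "(\<lambda>m. real (nn m) / real (kk m)) \<longlonglongrightarrow> 0"
      using tendsto_inverse_0_at_top[OF lim] by simp
    define A where "A m = x * ((1 - 1 / real (nn m)) / (1 + real (nn m) / real (kk m) - 1 / real (kk m)))" for m
    define B where "B m = (x + 2 * (real (nn m) / real (kk m))) / (1 - x * (1 / real (nn m)) - 1 / real (kk m))" for m
    have A_lim: "A \<longlonglongrightarrow> x * ((1 - 0) / (1 + 0 - 0))"
      unfolding A_def by (intro tendsto_intros inv_n inv_k nk) auto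
    have B_lim: "B \<longlonglongrightarrow> (x + 2 * 0) / (1 - x * 0 - 0)"
      unfolding B_def by (intro tendsto_intros inv_n inv_k nk) auto
    have rfacts: "x * y m \<le> real (r m)" "real (r m) \<le> x * y m + 2" for m
    proof -
      have "0 \<le> x * y m" using x0 by (simp add: y_def)
      then have "real (r m) = of_int \<lfloor>x * y m\<rfloor> + 2" by (simp add: r_def)
      then show "x * y m \<le> real (r m)" "real (r m) \<le> x * y m + 2" by linarith+
    qed
    have upper: "\<forall>\<^sub>F m in sequentially. tailp (nn m) (kk m) (r m) \<le> exp (- A m)"
      using kpos
    proof eventually_elim
      case (elim m)
      have n: "nn m \<ge> 2" using hyp by auto
      define nr where "nr = real (nn m)"
      define kr where "kr = real (kk m)"
      have nr: "nr \<ge> 2" and kr: "kr \<ge> 1" using n elim by (auto simp: nr_def kr_def)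
      have e1: "1 - 1 / nr = (nr - 1) / nr" using nr by (simp add: field_simps)
      have e2: "1 + nr / kr - 1 / kr = (nr - 1 + kr) / kr" using kr by (simp add: field_simps)
      have "A m = x * y m * ((nr - 1) / (nr - 1 + kr))"
        unfolding A_def y_def nr_def[symmetric] kr_def[symmetric] e1 e2
        using nr kr by (simp add: field_simps)
      also have "\<dots> \<le> real (r m) * ((nr - 1) / (nr - 1 + kr))"
        using rfacts(1)[of m] nr kr by (intro mult_right_mono) auto
      finally have "- real (r m) * ((nr - 1) / (nr - 1 + kr)) \<le> - A m" by simp
      then have ex: "exp (- real (r m) * ((nr - 1) / (nr - 1 + kr))) \<le> exp (- A m)" by simp
      have "tailp (nn m) (kk m) (r m) \<le> exp (- real (r m) * ((nr - 1) / (nr - 1 + kr)))"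
        using upper_exp[OF n, of "kk m" "r m"] by (simp only: nr_def kr_def)
      then show ?case using ex by linarith
    qed
    have big: "\<forall>\<^sub>F m in sequentially. real (kk m) * (1 - x * (1 / real (nn m))) \<ge> 2"
    proof -
      have "filterlim (\<lambda>m. real (kk m)) at_top sequentially"
        by (rule filterlim_compose[OF filterlim_real_sequentially kk])
      moreover have t1: "(\<lambda>m. 1 - x * (1 / real (nn m))) \<longlonglongrightarrow> 1 - x * 0"
        by (intro tendsto_intros inv_n)
      ultimately have "filterlim (\<lambda>m. real (kk m) * (1 - x * (1 / real (nn m)))) at_top sequentially"
        using filterlim_at_top_mult_tendsto_pos[OF t1] by simp
      then show ?thesis by (simp add: filterlim_at_top)
    qed
    have lower: "\<forall>\<^sub>F m in sequentially. exp (- B m) \<le> tailp (nn m) (kk m) (r m)"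
      using kpos big
    proof eventually_elim
      case (elim m)
      have n: "nn m \<ge> 2" using hyp by auto
      define nr where "nr = real (nn m)"
      define kr where "kr = real (kk m)"
      define R where "R = real (r m)"
      have nr: "nr \<ge> 2" and kr: "kr \<ge> 1" using n elim by (auto simp: nr_def kr_def)
      have xy: "x * y m = x * kr / nr" by (simp add: y_def nr_def kr_def)
      have bigm: "kr - x * y m \<ge> 2" using elim(2) nr by (simp add: xy kr_def[symmetric] nr_def[symmetric] algebra_simps)
      have R1: "x * y m \<le> R" "R \<le> x * y m + 2" using rfacts[of m] by (auto simp: R_def)
      have rk: "r m \<le> kk m"
      proof -
        have "R \<le> kr" using R1 bigm by linarith
        then show ?thesis by (simp add: R_def kr_def)
      qed
      have "R * (nr - 1) / (kr - R + 1) \<le> (x * y m + 2) * nr / (kr - x * y m - 1)"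
      proof (rule frac_le)
        show "0 \<le> (x * y m + 2) * nr" using x0 nr by (simp add: y_def)
        show "R * (nr - 1) \<le> (x * y m + 2) * nr"
          using R1 nr x0 by (intro mult_mono) (auto simp: y_def)
        show "0 < kr - x * y m - 1" using bigm by simp
        show "kr - x * y m - 1 \<le> kr - R + 1" using R1 by simp
      qed
      also have "(x * y m + 2) * nr / (kr - x * y m - 1) = B m"
      proof -
        have k0: "kr \<noteq> 0" using kr by simp
        have "(x * y m + 2) * nr / kr = x + 2 * (nr / kr)" using nr kr by (simp add: xy field_simps)
        moreover have "(kr - x * y m - 1) / kr = 1 - x * (1 / nr) - 1 / kr" using nr kr by (simp add: xy field_simps)
        ultimately show ?thesis unfolding B_def nr_def[symmetric] kr_def[symmetric]
          using div_div_same[OF k0, of "(x * y m + 2) * nr" "kr - x * y m - 1"] by simp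
      qed
      finally have "- B m \<le> - R * ((nr - 1) / (kr - R + 1))" by simp
      then have ex: "exp (- B m) \<le> exp (- R * ((nr - 1) / (kr - R + 1)))" by simp
      have "exp (- R * ((nr - 1) / (kr - R + 1))) \<le> tailp (nn m) (kk m) (r m)"
        using lower_exp[OF n rk] by (simp only: nr_def kr_def R_def)
      then show ?case using ex by linarith
    qed
    have "(\<lambda>m. tailp (nn m) (kk m) (r m)) \<longlonglongrightarrow> exp (- x)"
    proof (rule tendsto_sandwich[OF lower upper])
      show "(\<lambda>m. exp (- B m)) \<longlonglongrightarrow> exp (- x)" using B_lim by (intro tendsto_intros) simp
      show "(\<lambda>m. exp (- A m)) \<longlonglongrightarrow> exp (- x)" using A_lim by (intro tendsto_intros) simp
    qed
    then have "(\<lambda>m. 1 - tailp (nn m) (kk m) (r m)) \<longlonglongrightarrow> 1 - exp (- x)"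
      by (intro tendsto_diff) auto
    then show ?thesis using x0 by (simp add: cdf_exp1)
  qed
  show "(\<lambda>m. cdf (S_law (\<lambda>x. real (nn m) * real x / real (kk m)) (nn m) (kk m) (ii m)) x) \<longlonglongrightarrow> cdf exp1_law x"
    by (rule Lim_transform_eventually[OF goal cdfeq])
qed



lemma part1:
  assumes n: "n \<ge> 2" and i: "1 \<le> i" "i \<le> n"
  shows "weak_conv_m (\<lambda>k. S_law (\<lambda>x. real x / real k) n k i) (beta1_law n)"
  unfolding weak_conv_m_def weak_conv_def
proof (intro allI impI)
  fix x :: real
  have i': "i \<in> {1..n}" using i by simp
  define r where "r k = nat \<lfloor>x * real k\<rfloor> + 2" for k :: nat
  have cdfeq: "\<forall>\<^sub>F k in sequentially. (if x < 0 then 0 else 1 - tailp n k (r k))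
       = cdf (S_law (\<lambda>x. real x / real k) n k i) x"
    using eventually_ge_at_top[of "1::nat"]
  proof eventually_elim
    case (elim k)
    have a: "1 / real k > 0" using elim by simp
    have f: "(\<lambda>x. real x / real k) = (\<lambda>s. (1 / real k) * real s)" by (simp add: fun_eq_iff)
    have xa: "x / (1 / real k) = x * real k" by simp
    show ?case unfolding f cdf_S[OF n i' a] xa r_def by simp
  qed
  have rfacts: "x * real k \<le> real (r k)" "real (r k) \<le> x * real k + 2" "x * real k + 1 < real (r k)" if "x \<ge> 0" for k
  proof -
    have "0 \<le> x * real k" using that by simp
    then have "real (r k) = of_int \<lfloor>x * real k\<rfloor> + 2" by (simp add: r_def)
    then show "x * real k \<le> real (r k)" "real (r k) \<le> x * real k + 2" "x * real k + 1 < real (r k)" by linarith+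
  qed
  have goal: "(\<lambda>k. if x < 0 then 0 else 1 - tailp n k (r k)) \<longlonglongrightarrow> cdf (beta1_law n) x"
  proof (cases "x < 0")
    case True then show ?thesis using n by (simp add: cdf_beta)
  next
    case False
    then have x0: "x \<ge> 0" by simp
    show ?thesis
    proof (cases "x \<ge> 1")
      case True
      have "\<forall>\<^sub>F k in sequentially. 1 = (if x < 0 then 0 else 1 - tailp n k (r k))"
      proof (rule always_eventually, rule allI)
        fix k
        have "real k \<le> x * real k" using mult_right_mono[OF True, of "real k"] by simp
        then have "real k < real (r k)" using rfacts(3)[OF x0, of k] by linarith
        then have "k < r k" by simp
        then show "1 = (if x < 0 then 0 else 1 - tailp n k (r k))" using x0 by (simp add: tailp_zero)
      qed
      moreover have "cdf (beta1_law n) x = 1" using True n by (auto simp: cdf_beta)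
      ultimately show ?thesis using Lim_transform_eventually[OF tendsto_const[of 1]] by simp
    next
      case False
      then have x1: "x < 1" by simp
      have big: "\<forall>\<^sub>F k in sequentially. real k \<ge> 2 / (1 - x) + 1"
        using filterlim_real_sequentially by (simp add: filterlim_at_top)
      have eqp: "\<forall>\<^sub>F k in sequentially. (\<Prod>t<n - 1. (1 - real (r k) / real k + (1 + real t) * (1 / real k)) / (1 + (1 + real t) * (1 / real k)))
                 = tailp n k (r k)"
        using big
      proof eventually_elim
        case (elim k)
        have "2 / (1 - x) > 0" using x1 by simp
        then have kpos: "real k > 0" using elim by linarith
        then have k0: "real k \<noteq> 0" by simp
        have "2 \<le> real k * (1 - x)" using elim x1 by (simp add: field_simps)
        then have "real (r k) \<le> real k" using rfacts(2)[OF x0, of k] by (simp add: algebra_simps)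
        then have rk: "r k \<le> k" by simp
        have "tailp n k (r k) = (\<Prod>t<n - 1. (real k - real (r k) + 1 + real t) / (real k + 1 + real t))"
          by (rule tailp_prod2[OF n rk])
        also have "\<dots> = (\<Prod>t<n - 1. (1 - real (r k) / real k + (1 + real t) * (1 / real k)) / (1 + (1 + real t) * (1 / real k)))"
        proof (rule prod.cong[OF refl])
          fix t
          have c1: "(1 - real (r k) / real k + (1 + real t) * (1 / real k)) = (real k - real (r k) + 1 + real t) / real k"
            using k0 by (simp add: field_simps)
          have c2: "(1 + (1 + real t) * (1 / real k)) = (real k + 1 + real t) / real k"
            using k0 by (simp add: field_simps)
          show "(real k - real (r k) + 1 + real t) / (real k + 1 + real t) =
              (1 - real (r k) / real k + (1 + real t) * (1 / real k)) / (1 + (1 + real t) * (1 / real k))"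
            unfolding c1 c2 by (rule div_div_same[OF k0, symmetric])
        qed
        finally show ?case by simp
      qed
      have inv_k: "(\<lambda>k. 1 / real k) \<longlonglongrightarrow> (0::real)"
        using inv_real_to0[of "\<lambda>k. k", OF filterlim_ident] by simp
      have rk_lim: "(\<lambda>k. real (r k) / real k) \<longlonglongrightarrow> x"
      proof (rule tendsto_sandwich[where f = "\<lambda>_. x" and h = "\<lambda>k. x + 2 * (1 / real k)"])
        show "\<forall>\<^sub>F k in sequentially. x \<le> real (r k) / real k"
          using eventually_ge_at_top[of "1::nat"]
        proof eventually_elim
          case (elim k) then show ?case using rfacts(1)[OF x0, of k] by (simp add: field_simps)
        qed
        show "\<forall>\<^sub>F k in sequentially. real (r k) / real k \<le> x + 2 * (1 / real k)"
          using eventually_ge_at_top[of "1::nat"]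
        proof eventually_elim
          case (elim k) then show ?case using rfacts(2)[OF x0, of k] by (simp add: field_simps)
        qed
        show "(\<lambda>k. x + 2 * (1 / real k)) \<longlonglongrightarrow> x"
          using tendsto_add[OF tendsto_const tendsto_mult_right_zero[OF inv_k, of 2], of x] by simp
      qed simp
      have "(\<lambda>k. \<Prod>t<n - 1. (1 - real (r k) / real k + (1 + real t) * (1 / real k)) / (1 + (1 + real t) * (1 / real k)))
            \<longlonglongrightarrow> (\<Prod>t<n - 1. (1 - x + (1 + real t) * 0) / (1 + (1 + real t) * 0))"
      proof (rule tendsto_prod)
        fix t :: nat
        show "(\<lambda>k. (1 - real (r k) / real k + (1 + real t) * (1 / real k)) / (1 + (1 + real t) * (1 / real k)))
            \<longlonglongrightarrow> (1 - x + (1 + real t) * 0) / (1 + (1 + real t) * 0)"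
          by (rule tendsto_divide, (rule tendsto_add tendsto_diff tendsto_mult tendsto_const rk_lim inv_k)+) simp
      qed
      then have "(\<lambda>k. tailp n k (r k)) \<longlonglongrightarrow> (1 - x) ^ (n - 1)"
        using Lim_transform_eventually[OF _ eqp] by simp
      then have "(\<lambda>k. 1 - tailp n k (r k)) \<longlonglongrightarrow> 1 - (1 - x) ^ (n - 1)"
        by (intro tendsto_diff) auto
      then have "(\<lambda>k. (if x < 0 then 0 else 1 - tailp n k (r k))) \<longlonglongrightarrow> 1 - (1 - x) ^ (n - 1)"
        using x0 by simp
      then show ?thesis using x0 x1 n by (simp add: cdf_beta)
    qed
  qed
  show "(\<lambda>k. cdf (S_law (\<lambda>x. real x / real k) n k i) x) \<longlonglongrightarrow> cdf (beta1_law n) x"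
    by (rule Lim_transform_eventually[OF goal cdfeq])
qed


theorem mainTheorem17:
  shows
  "(\<forall>n i. 2 \<le> n \<and> 1 \<le> i \<and> i \<le> n \<longrightarrow>
      weak_conv_m (\<lambda>k. S_law (\<lambda>x. real x / real k) n k i) (beta1_law n))
   \<and>
   (\<forall>nn kk ii :: nat \<Rightarrow> nat.
      (\<forall>m. 2 \<le> nn m \<and> 1 \<le> ii m \<and> ii m \<le> nn m) \<and>
      filterlim nn at_top sequentially \<and> filterlim kk at_top sequentially \<and>
      filterlim (\<lambda>m. real (kk m) / real (nn m)) at_top sequentially \<longrightarrow>
      weak_conv_m (\<lambda>m. S_law (\<lambda>x. real (nn m) * real x / real (kk m)) (nn m) (kk m) (ii m))
                  exp1_law)
   \<and>
   (\<forall>(c::real) (nn :: nat \<Rightarrow> nat) (kk :: nat \<Rightarrow> nat) (ii :: nat \<Rightarrow> nat).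
      0 < c \<and>
      (\<forall>m. 2 \<le> nn m \<and> 1 \<le> ii m \<and> ii m \<le> nn m) \<and>
      filterlim nn at_top sequentially \<and> filterlim kk at_top sequentially \<and>
      ((\<lambda>m. real (kk m) / real (nn m)) \<longlonglongrightarrow> c) \<longrightarrow>
      weak_conv_m (\<lambda>m. S_law real (nn m) (kk m) (ii m)) (G_law c))
   \<and>
   (\<forall>nn kk ii :: nat \<Rightarrow> nat.
      (\<forall>m. 2 \<le> nn m \<and> 1 \<le> ii m \<and> ii m \<le> nn m) \<and>
      filterlim nn at_top sequentially \<and>
      ((\<lambda>m. real (kk m) / real (nn m)) \<longlonglongrightarrow> 0) \<longrightarrow>
      weak_conv_m (\<lambda>m. S_law real (nn m) (kk m) (ii m)) (return borel 0))"
  by (blast intro: part1 part2 part3 part4)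

end
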